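(* Let $(\Omega,\mathcal{F},\mathbb{P},\theta,\varphi)$ be a discrete-time random dynamical system on a separable Hilbert space $\mathcal{H}$. Assume there exist a $\varphi$-invariant random point $A(\omega)$, some $\mu>0$ and measurable functions $0<\alpha(\omega)<\beta(\omega)<1$ such that the set $$U(\omega)=\Big\{x_0\in\bar B(A(\omega),\alpha(\omega)):\ \exists (x_n)_{n\in\mathbb{N}}\text{ with }\varphi_1(\theta_{-n}\omega,x_n)=x_{n-1}\text{ and }\|x_n-A(\theta_{-n}\omega)\|\le\beta(\omega)e^{-\mu n}\text{ for all }n\ge0\Big\}$$ consists of more than one point for $\mathbb{P}$-almost every $\omega$. Assume further that there exists some $x_0(\omega)\in U(\omega)\setminus A(\omega)$ such that the corresponding points $x_n(\omega)$, $n\ge 0$, chosen as in the definition of $U(\omega)$, are random points. Then $\varphi$ does not synchronize.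
   Context: $(\Omega,\mathcal{F},\mathbb{P},\theta)$ is a metric dynamical system: $(\Omega,\mathcal{F},\mathbb{P})$ is a probability space and $(\theta_n)_{n\in\mathbb{Z}}$ is a group of measurable maps with $\theta_0=\mathrm{id}$ leaving $\mathbb{P}$ invariant. A random dynamical system is a jointly measurable map $\varphi:\mathbb{N}_0\times\Omega\times\mathcal{H}\to\mathcal{H}$ with $\varphi_0(\omega,x)=x$, $\varphi_{s+t}(\omega,x)=\varphi_t(\theta_s\omega,\varphi_s(\omega,x))$ and $x\mapsto\varphi_t(\omega,x)$ continuous; it is assumed that there is a family of sub-$\sigma$-algebras $(\mathcal{F}_{s,t})_{s\le t}$ with $\theta_r^{-1}(\mathcal{F}_{s,t})=\mathcal{F}_{s+r,t+r}$, $\mathcal{F}_{t,u}\subset\mathcal{F}_{s,v}$ for $s\le t\le u\le v$, and $\varphi_t(\cdot,x)$ $\mathcal{F}_{0,t}$-measurable. A family $\{A(\omega)\}_{\omega\in\Omega}$ of non-empty subsets of $\mathcal{H}$ is a random point (resp. random compact set) if it is $\mathbb{P}$-a.s. a single point (resp. compact set) and $\omega\mapsto\inf_{a\in A(\omega)}\|x-a\|$ is $\mathcal{F}$-measurable for each $x\in\mathcal{H}$; it is $\varphi$-invariant if $\varphi_t(\omega,A(\omega))=A(\theta_t\omega)$ for all $t\ge0$ and almost all $\omega$. A random compact set $A$ is a weak attractor if it is $\varphi$-invariant and for every compact $B\subset\mathcal{H}$, $\sup_{x\in B}\inf_{a\in A(\omega)}\|\varphi_t(\theta_{-t}\omega,x)-a\|\to0$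 in probability as $t\to\infty$. Synchronization occurs if there is a weak attractor $A(\omega)$ which is a singleton for $\mathbb{P}$-almost every $\omega$. $\bar B(x,r)$ is the closed ball of radius $r$ about $x$. *)

theory Defs
  imports "HOL-Probability.Probability"
begin

definition metric_dynamical_system :: "'w measure \<Rightarrow> (int \<Rightarrow> 'w \<Rightarrow> 'w) \<Rightarrow> bool" where
  "metric_dynamical_system M \<theta> \<longleftrightarrow>
     prob_space M \<and>
     (\<forall>n. \<theta> n \<in> measurable M M \<and> distr M M (\<theta> n) = M) \<and>
     (\<forall>\<omega>\<in>space M. \<theta> 0 \<omega> = \<omega>) \<and>
     (\<forall>s t. \<forall>\<omega>\<in>space M. \<theta> (s + t) \<omega> = \<theta> s (\<theta> t \<omega>))"

definition rds ::
  "'w measure \<Rightarrow> (int \<Rightarrow> 'w \<Rightarrow> 'w) \<Rightarrow> (int \<Rightarrow> int \<Rightarrow> 'w measure)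
     \<Rightarrow> (nat \<Rightarrow> 'w \<Rightarrow> 'h::{real_inner, banach, second_countable_topology} \<Rightarrow> 'h) \<Rightarrow> bool" where
  "rds M \<theta> F \<phi> \<longleftrightarrow>
     metric_dynamical_system M \<theta> \<and>
     (\<forall>t. (\<lambda>(\<omega>, x). \<phi> t \<omega> x) \<in> borel_measurable (M \<Otimes>\<^sub>M borel)) \<and>
     (\<forall>\<omega>\<in>space M. \<forall>x. \<phi> 0 \<omega> x = x) \<and>
     (\<forall>s t. \<forall>\<omega>\<in>space M. \<forall>x. \<phi> (s + t) \<omega> x = \<phi> t (\<theta> (int s) \<omega>) (\<phi> s \<omega> x)) \<and>
     (\<forall>t. \<forall>\<omega>\<in>space M. continuous_on UNIV (\<phi> t \<omega>)) \<and>
     (\<forall>s t. s \<le> t \<longrightarrow> subalgebra M (F s t)) \<and>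
     (\<forall>r s t. s \<le> t \<longrightarrow>
        {\<theta> r -` S \<inter> space M | S. S \<in> sets (F s t)} = sets (F (s + r) (t + r))) \<and>
     (\<forall>s t u v. s \<le> t \<and> t \<le> u \<and> u \<le> v \<longrightarrow> sets (F t u) \<subseteq> sets (F s v)) \<and>
     (\<forall>t x. (\<lambda>\<omega>. \<phi> t \<omega> x) \<in> borel_measurable (F 0 (int t)))"

definition random_point :: "'w measure \<Rightarrow> ('w \<Rightarrow> 'h::metric_space set) \<Rightarrow> bool" where
  "random_point M A \<longleftrightarrow>
     (\<forall>\<omega>\<in>space M. A \<omega> \<noteq> {}) \<and>
     (AE \<omega> in M. \<exists>a. A \<omega> = {a}) \<and>
     (\<forall>x. (\<lambda>\<omega>. infdist x (A \<omega>)) \<in> borel_measurable M)"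

definition random_compact_set :: "'w measure \<Rightarrow> ('w \<Rightarrow> 'h::metric_space set) \<Rightarrow> bool" where
  "random_compact_set M A \<longleftrightarrow>
     (\<forall>\<omega>\<in>space M. A \<omega> \<noteq> {}) \<and>
     (AE \<omega> in M. compact (A \<omega>)) \<and>
     (\<forall>x. (\<lambda>\<omega>. infdist x (A \<omega>)) \<in> borel_measurable M)"

definition invariant_set ::
  "'w measure \<Rightarrow> (int \<Rightarrow> 'w \<Rightarrow> 'w) \<Rightarrow> (nat \<Rightarrow> 'w \<Rightarrow> 'h \<Rightarrow> 'h) \<Rightarrow> ('w \<Rightarrow> 'h set) \<Rightarrow> bool" where
  "invariant_set M \<theta> \<phi> A \<longleftrightarrow> (\<forall>t. AE \<omega> in M. \<phi> t \<omega> ` A \<omega> = A (\<theta> (int t) \<omega>))"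

definition weak_attractor ::
  "'w measure \<Rightarrow> (int \<Rightarrow> 'w \<Rightarrow> 'w) \<Rightarrow> (nat \<Rightarrow> 'w \<Rightarrow> 'h::metric_space \<Rightarrow> 'h) \<Rightarrow> ('w \<Rightarrow> 'h set) \<Rightarrow> bool" where
  "weak_attractor M \<theta> \<phi> A \<longleftrightarrow>
     random_compact_set M A \<and> invariant_set M \<theta> \<phi> A \<and>
     (\<forall>B. compact B \<and> B \<noteq> {} \<longrightarrow>
        (\<forall>\<epsilon>>0. (\<lambda>t. measure M {\<omega> \<in> space M.
            (SUP x\<in>B. infdist (\<phi> t (\<theta> (- int t) \<omega>) x) (A \<omega>)) > \<epsilon>}) \<longlonglongrightarrow> 0))"

definition synchronizes ::
  "'w measure \<Rightarrow> (int \<Rightarrow> 'w \<Rightarrow> 'w) \<Rightarrow> (nat \<Rightarrow> 'w \<Rightarrow> 'h::metric_space \<Rightarrow> 'h) \<Rightarrow> bool" where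
  "synchronizes M \<theta> \<phi> \<longleftrightarrow>
     (\<exists>A. weak_attractor M \<theta> \<phi> A \<and> (AE \<omega> in M. \<exists>a. A \<omega> = {a}))"

text \<open>Backward orbit condition from the definition of U(omega); the distance to the
  (a.s. singleton) set A is written with infdist.\<close>

definition backward_orbit ::
  "(int \<Rightarrow> 'w \<Rightarrow> 'w) \<Rightarrow> (nat \<Rightarrow> 'w \<Rightarrow> 'h::real_normed_vector \<Rightarrow> 'h) \<Rightarrow> ('w \<Rightarrow> 'h set)
     \<Rightarrow> real \<Rightarrow> ('w \<Rightarrow> real) \<Rightarrow> 'w \<Rightarrow> (nat \<Rightarrow> 'h) \<Rightarrow> bool" where
  "backward_orbit \<theta> \<phi> A \<mu> \<beta> \<omega> xs \<longleftrightarrow>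
     (\<forall>n\<ge>1. \<phi> 1 (\<theta> (- int n) \<omega>) (xs n) = xs (n - 1)) \<and>
     (\<forall>n. infdist (xs n) (A (\<theta> (- int n) \<omega>)) \<le> \<beta> \<omega> * exp (- \<mu> * real n))"

definition U_set ::
  "(int \<Rightarrow> 'w \<Rightarrow> 'w) \<Rightarrow> (nat \<Rightarrow> 'w \<Rightarrow> 'h::real_normed_vector \<Rightarrow> 'h) \<Rightarrow> ('w \<Rightarrow> 'h set)
     \<Rightarrow> real \<Rightarrow> ('w \<Rightarrow> real) \<Rightarrow> ('w \<Rightarrow> real) \<Rightarrow> 'w \<Rightarrow> 'h set" where
  "U_set \<theta> \<phi> A \<mu> \<alpha> \<beta> \<omega> =
     {x0. infdist x0 (A \<omega>) \<le> \<alpha> \<omega> \<and>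
          (\<exists>xs. xs 0 = x0 \<and> backward_orbit \<theta> \<phi> A \<mu> \<beta> \<omega> xs)}"

end

theory Submission
  imports Defs
begin


lemma dense_subset_ex:
  fixes B :: "'a::second_countable_topology set"
  shows "\<exists>D. countable D \<and> D \<subseteq> B \<and> (\<forall>U. open U \<and> U \<inter> B \<noteq> {} \<longrightarrow> U \<inter> D \<noteq> {})"
proof -
  obtain \<B> :: "'a set set" where cb: "countable \<B>" "topological_basis \<B>"
    using ex_countable_basis by blast
  define D where "D = (\<lambda>b. SOME x. x \<in> b \<inter> B) ` {b\<in>\<B>. b \<inter> B \<noteq> {}}"
  have "countable D" unfolding D_def using cb(1) by auto
  moreover have "D \<subseteq> B"
  proof
    fix x assume "x \<in> D"
    then obtain b where b: "b \<inter> B \<noteq> {}" "x = (SOME x. x \<in> b \<inter> B)" unfolding D_def by auto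
    then have "\<exists>x. x \<in> b \<inter> B" by auto
    from someI_ex[OF this] b show "x \<in> B" by simp
  qed
  moreover have "U \<inter> D \<noteq> {}" if hU: "open U" "U \<inter> B \<noteq> {}" for U
  proof -
    obtain x where x: "x \<in> U" "x \<in> B" using hU(2) by blast
    obtain b where b: "b \<in> \<B>" "x \<in> b" "b \<subseteq> U" using topological_basisE[OF cb(2) \<open>open U\<close> x(1)] by blast
    have "(SOME x. x \<in> b \<inter> B) \<in> b \<inter> B" using b x by (intro someI) auto
    moreover have "(SOME x. x \<in> b \<inter> B) \<in> D" unfolding D_def using b x by auto
    ultimately show ?thesis using b by auto
  qed
  ultimately show ?thesis by (intro exI[of _ D]) blast
qed

lemma measurable_from_dist:
  fixes f :: "'w \<Rightarrow> 'h::{metric_space, second_countable_topology}"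
  assumes "\<And>y. (\<lambda>\<omega>. dist y (f \<omega>)) \<in> borel_measurable M"
  shows "f \<in> borel_measurable M"
proof (rule borel_measurableI)
  fix S :: "'h set" assume S: "open S"
  obtain D :: "'h set" where D: "countable D" "D \<subseteq> UNIV" "\<forall>U. open U \<and> U \<inter> UNIV \<noteq> {} \<longrightarrow> U \<inter> D \<noteq> {}"
    using dense_subset_ex[of "UNIV :: 'h set"] by blast
  show "f -` S \<inter> space M \<in> sets M"
  proof (cases "S = UNIV")
    case True then show ?thesis by simp
  next
    case False
    have eq: "f -` S \<inter> space M = (\<Union>d\<in>D \<inter> S. {\<omega>\<in>space M. dist d (f \<omega>) < infdist d (- S)})"
    proof (intro set_eqI iffI)
      fix \<omega> assume w: "\<omega> \<in> f -` S \<inter> space M"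
      have r: "infdist (f \<omega>) (- S) > 0"
      proof -
        have "closed (- S)" "- S \<noteq> {}" using S False by auto
        moreover have "f \<omega> \<notin> - S" using w by auto
        ultimately have "infdist (f \<omega>) (- S) \<noteq> 0" using in_closed_iff_infdist_zero[of "- S" "f \<omega>"] by simp
        then show ?thesis using infdist_nonneg[of "f \<omega>" "- S"] by linarith
      qed
      define r where "r = infdist (f \<omega>) (- S)"
      have "ball (f \<omega>) (r/2) \<inter> D \<noteq> {}" using D(3) r r_def by auto
      then obtain d where d: "d \<in> D" "dist (f \<omega>) d < r/2" by auto
      have "r \<le> infdist d (- S) + dist (f \<omega>) d" unfolding r_def by (rule infdist_triangle)
      then have 1: "dist d (f \<omega>) < infdist d (-S)" using d by (simp add: dist_commute)
      have "d \<in> S"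
      proof (rule ccontr)
        assume "d \<notin> S" then have "infdist d (-S) = 0" using infdist_zero[of d "- S"] by simp
        then show False using 1 zero_le_dist[of d "f \<omega>"] by linarith
      qed
      then show "\<omega> \<in> (\<Union>d\<in>D \<inter> S. {\<omega>\<in>space M. dist d (f \<omega>) < infdist d (- S)})"
        using d(1) 1 w by auto
    next
      fix \<omega> assume "\<omega> \<in> (\<Union>d\<in>D \<inter> S. {\<omega>\<in>space M. dist d (f \<omega>) < infdist d (- S)})"
      then obtain d where d: "d \<in> S" "\<omega> \<in> space M" "dist d (f \<omega>) < infdist d (- S)" by auto
      have "f \<omega> \<in> S"
      proof (rule ccontr)
        assume "f \<omega> \<notin> S"
        then have "infdist d (- S) \<le> dist d (f \<omega>)" by (intro infdist_le) auto
        then show False using d by simp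
      qed
      then show "\<omega> \<in> f -` S \<inter> space M" using d by auto
    qed
    show ?thesis unfolding eq
    proof (rule sets.countable_UN')
      show "countable (D \<inter> S)" using D(1) by simp
      show "(\<lambda>d. {\<omega>\<in>space M. dist d (f \<omega>) < infdist d (- S)}) ` (D \<inter> S) \<subseteq> sets M"
      proof (clarify)
        fix d assume "d \<in> D" "d \<in> S"
        have "(\<lambda>\<omega>. dist d (f \<omega>)) \<in> borel_measurable M" by (rule assms)
        then show "{\<omega>\<in>space M. dist d (f \<omega>) < infdist d (- S)} \<in> sets M"
          unfolding borel_measurable_iff_less by simp
      qed
    qed
  qed
qed

lemma measurable_infdist_comp:
  fixes y :: "'w \<Rightarrow> 'h::{metric_space, second_countable_topology}"
  assumes y: "y \<in> borel_measurable M"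
    and S: "\<And>x. (\<lambda>\<omega>. infdist x (S \<omega>)) \<in> borel_measurable M"
  shows "(\<lambda>\<omega>. infdist (y \<omega>) (S \<omega>)) \<in> borel_measurable M"
proof (rule borel_measurableI_less)
  fix c :: real
  obtain D :: "'h set" where D: "countable D" "D \<subseteq> UNIV" "\<forall>U. open U \<and> U \<inter> UNIV \<noteq> {} \<longrightarrow> U \<inter> D \<noteq> {}"
    using dense_subset_ex[of "UNIV :: 'h set"] by blast
  have eq: "{\<omega> \<in> space M. infdist (y \<omega>) (S \<omega>) < c} =
     (\<Union>d\<in>D. {\<omega> \<in> space M. infdist d (S \<omega>) + dist (y \<omega>) d < c})"
  proof (intro set_eqI iffI)
    fix \<omega> assume w: "\<omega> \<in> {\<omega> \<in> space M. infdist (y \<omega>) (S \<omega>) < c}"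
    define e where "e = (c - infdist (y \<omega>) (S \<omega>)) / 2"
    have e: "e > 0" using w unfolding e_def by auto
    have "ball (y \<omega>) e \<inter> D \<noteq> {}" using D(3) e by auto
    then obtain d where d: "d \<in> D" "dist (y \<omega>) d < e" by auto
    have "infdist d (S \<omega>) \<le> infdist (y \<omega>) (S \<omega>) + dist d (y \<omega>)" by (rule infdist_triangle)
    then have "infdist d (S \<omega>) + dist (y \<omega>) d < c" using d unfolding e_def by (simp add: dist_commute)
    then show "\<omega> \<in> (\<Union>d\<in>D. {\<omega> \<in> space M. infdist d (S \<omega>) + dist (y \<omega>) d < c})"
      using d(1) w by auto
  next
    fix \<omega> assume "\<omega> \<in> (\<Union>d\<in>D. {\<omega> \<in> space M. infdist d (S \<omega>) + dist (y \<omega>) d < c})"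
    then obtain d where d: "\<omega> \<in> space M" "infdist d (S \<omega>) + dist (y \<omega>) d < c" by auto
    have "infdist (y \<omega>) (S \<omega>) \<le> infdist d (S \<omega>) + dist (y \<omega>) d" by (rule infdist_triangle)
    then show "\<omega> \<in> {\<omega> \<in> space M. infdist (y \<omega>) (S \<omega>) < c}" using d by auto
  qed
  have m: "(\<lambda>\<omega>. infdist d (S \<omega>) + dist (y \<omega>) d) \<in> borel_measurable M" for d
    using S[of d] y by (intro borel_measurable_add borel_measurable_dist) auto
  show "{\<omega> \<in> space M. infdist (y \<omega>) (S \<omega>) < c} \<in> sets M" unfolding eq
  proof (rule sets.countable_UN')
    show "countable D" by (rule D(1))
    show "(\<lambda>d. {\<omega> \<in> space M. infdist d (S \<omega>) + dist (y \<omega>) d < c}) ` D \<subseteq> sets M"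
      using m unfolding borel_measurable_iff_less by auto
  qed
qed

lemma measurable_SUP_compact:
  fixes g :: "'h::{metric_space, second_countable_topology} \<Rightarrow> 'w \<Rightarrow> real"
  assumes B: "compact B" "B \<noteq> {}"
    and g: "\<And>x. g x \<in> borel_measurable M"
    and c: "\<And>\<omega>. \<omega> \<in> space M \<Longrightarrow> continuous_on B (\<lambda>x. g x \<omega>)"
  shows "(\<lambda>\<omega>. SUP x\<in>B. g x \<omega>) \<in> borel_measurable M"
proof (rule borel_measurableI_greater)
  fix c :: real
  obtain D where D: "countable D" "D \<subseteq> B" "\<forall>U. open U \<and> U \<inter> B \<noteq> {} \<longrightarrow> U \<inter> D \<noteq> {}"
    using dense_subset_ex[of B] by blast
  have eq: "{\<omega> \<in> space M. c < (SUP x\<in>B. g x \<omega>)} = (\<Union>d\<in>D. {\<omega> \<in> space M. c < g d \<omega>})"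
  proof (intro set_eqI iffI)
    fix \<omega> assume w: "\<omega> \<in> {\<omega> \<in> space M. c < (SUP x\<in>B. g x \<omega>)}"
    have "compact ((\<lambda>x. g x \<omega>) ` B)" by (rule compact_continuous_image[OF c B(1)]) (use w in simp)
    then have bdd: "bdd_above ((\<lambda>x. g x \<omega>) ` B)" by (intro bounded_imp_bdd_above compact_imp_bounded)
    obtain x where x: "x \<in> B" "c < g x \<omega>" using w less_cSUP_iff[OF _ bdd, of c] B(2) by auto
    have "openin (top_of_set B) (B \<inter> (\<lambda>x. g x \<omega>) -` {c<..})"
      using continuous_openin_preimage_gen[OF c[of \<omega>], of "{c<..}"] w by auto
    then obtain U where U: "open U" "B \<inter> (\<lambda>x. g x \<omega>) -` {c<..} = U \<inter> B"
      unfolding openin_open by auto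
    have "U \<inter> B \<noteq> {}" using U(2) x by auto
    then obtain d where d: "d \<in> U" "d \<in> D" using D(3) U(1) by auto
    then have "c < g d \<omega>" using U(2) D(2) by auto
    then show "\<omega> \<in> (\<Union>d\<in>D. {\<omega> \<in> space M. c < g d \<omega>})" using d w by auto
  next
    fix \<omega> assume "\<omega> \<in> (\<Union>d\<in>D. {\<omega> \<in> space M. c < g d \<omega>})"
    then obtain d where d: "d \<in> D" "\<omega> \<in> space M" "c < g d \<omega>" by auto
    have "compact ((\<lambda>x. g x \<omega>) ` B)" by (rule compact_continuous_image[OF c B(1)]) (use d in simp)
    then have bdd: "bdd_above ((\<lambda>x. g x \<omega>) ` B)" by (intro bounded_imp_bdd_above compact_imp_bounded)
    have "g d \<omega> \<le> (SUP x\<in>B. g x \<omega>)" using cSUP_upper[OF _ bdd, of d] d D(2) by auto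
    then show "\<omega> \<in> {\<omega> \<in> space M. c < (SUP x\<in>B. g x \<omega>)}" using d by auto
  qed
  show "{\<omega> \<in> space M. c < (SUP x\<in>B. g x \<omega>)} \<in> sets M" unfolding eq
  proof (rule sets.countable_UN')
    show "countable D" by (rule D(1))
    show "(\<lambda>d. {\<omega> \<in> space M. c < g d \<omega>}) ` D \<subseteq> sets M"
      using g unfolding borel_measurable_iff_greater by auto
  qed
qed



lemma compact_tail_union:
  fixes K :: "'a::metric_space set" and L :: "nat \<Rightarrow> 'a set"
  assumes K: "compact K" "K \<noteq> {}" and L: "\<And>t. compact (L t)"
    and r: "\<And>e. e > 0 \<Longrightarrow> \<exists>T. \<forall>t\<ge>T. r t < e"
  shows "compact (K \<union> (\<Union>t. L t \<inter> {y. infdist y K \<le> r t}))"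
  unfolding compact_eq_Heine_Borel
proof (intro allI impI, elim conjE)
  fix C assume Co: "\<forall>c\<in>C. open c" and sub: "K \<union> (\<Union>t. L t \<inter> {y. infdist y K \<le> r t}) \<subseteq> \<Union>C"
  have cl: "closed {y. infdist y K \<le> c}" for c
    by (intro closed_Collect_le continuous_on_infdist continuous_on_id continuous_on_const)
  obtain D1 where D1: "D1 \<subseteq> C" "finite D1" "K \<subseteq> \<Union>D1"
    using K(1) sub Co unfolding compact_eq_Heine_Borel by (meson Un_subset_iff)
  have "open (\<Union>D1)" using D1(1) Co by auto
  then obtain e where e: "e > 0" "(\<Union>x\<in>K. ball x e) \<subseteq> \<Union>D1"
    using compact_subset_open_imp_ball_epsilon_subset[OF K(1) \<open>open (\<Union>D1)\<close> D1(3)] by metis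
  obtain T where T: "\<forall>t\<ge>T. r t < e" using r[OF e(1)] by blast
  define F where "F = (\<Union>t\<in>{..<T}. L t \<inter> {y. infdist y K \<le> r t})"
  have "compact F" unfolding F_def
    by (intro compact_UN finite_lessThan compact_Int_closed L cl)
  moreover have "F \<subseteq> \<Union>C" using sub unfolding F_def by blast
  ultimately obtain D2 where D2: "D2 \<subseteq> C" "finite D2" "F \<subseteq> \<Union>D2"
    using Co unfolding compact_eq_Heine_Borel by (meson)
  have "K \<union> (\<Union>t. L t \<inter> {y. infdist y K \<le> r t}) \<subseteq> \<Union>(D1 \<union> D2)"
  proof
    fix y assume "y \<in> K \<union> (\<Union>t. L t \<inter> {y. infdist y K \<le> r t})"
    then consider "y \<in> K" | t where "y \<in> L t" "infdist y K \<le> r t" by blast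
    then show "y \<in> \<Union>(D1 \<union> D2)"
    proof cases
      case 1 then show ?thesis using D1(3) by blast
    next
      case (2 t)
      show ?thesis
      proof (cases "t < T")
        case True
        then have "y \<in> F" unfolding F_def using 2 by blast
        then show ?thesis using D2(3) by blast
      next
        case False
        then have "r t < e" using T by simp
        then have "infdist y K < e" using 2 by linarith
        then have i: "(INF k\<in>K. dist y k) < e" using infdist_notempty[OF K(2)] by simp
        have bb: "bdd_below ((\<lambda>k. dist y k) ` K)" by (rule bdd_belowI[of _ 0]) auto
        have "\<exists>k\<in>K. dist y k < e" using i unfolding cINF_less_iff[OF K(2) bb] .
        then obtain k where "k \<in> K" "dist y k < e" by blast
        then have "y \<in> (\<Union>x\<in>K. ball x e)" by (auto simp: dist_commute)
        then show ?thesis using e(2) by blast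
      qed
    qed
  qed
  then show "\<exists>D\<subseteq>C. finite D \<and> K \<union> (\<Union>t. L t \<inter> {y. infdist y K \<le> r t}) \<subseteq> \<Union>D"
    using D1 D2 by (intro exI[of _ "D1 \<union> D2"]) auto
qed

lemma tight_rv:
  fixes z :: "'w \<Rightarrow> 'h::{complete_space, second_countable_topology}"
  assumes P: "prob_space M" and z: "z \<in> borel_measurable M" and e: "e > 0"
  shows "\<exists>K. compact K \<and> K \<noteq> {} \<and> measure M {\<omega>\<in>space M. z \<omega> \<notin> K} \<le> e"
proof -
  interpret prob_space M by (rule P)
  define N where "N = distr M borel z"
  have sN: "sets N = sets borel" unfolding N_def by simp
  have fN: "finite_measure N" unfolding N_def by (intro finite_measure_distr z)
  have mN: "measure N K = measure M (z -` K \<inter> space M)" if "K \<in> sets borel" for K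
    unfolding N_def using that z by (intro measure_distr) auto
  have spN: "space N = UNIV" unfolding N_def by simp
  have N1: "emeasure N UNIV = 1"
    unfolding N_def using z by (subst emeasure_distr) (auto simp: emeasure_space_1)
  show ?thesis
  proof (cases "e \<ge> 1")
    case True
    show ?thesis using True by (intro exI[of _ "{undefined}"] conjI order_trans[OF prob_le_1]) auto
  next
    case False
    have "emeasure N UNIV = (SUP K \<in> {K. K \<subseteq> UNIV \<and> compact K}. emeasure N K)"
      using fN by (intro inner_regular sN) (auto simp: N1 finite_measure.emeasure_finite)
    then have "ennreal (1 - e) < (SUP K \<in> {K. K \<subseteq> UNIV \<and> compact K}. emeasure N K)"
      using N1 False e by (simp add: ennreal_lessI)
    then obtain K where K: "compact K" "ennreal (1 - e) < emeasure N K"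
      by (auto simp: less_SUP_iff)
    have Kb: "K \<in> sets borel" using K(1) by (simp add: borel_compact)
    have "emeasure N K = ennreal (measure N K)"
      using fN by (simp add: finite_measure.emeasure_eq_measure)
    then have "1 - e < measure N K" using K(2) False e
      by (simp add: ennreal_less_iff)
    then have lt: "1 - e < prob (z -` K \<inter> space M)" using mN[OF Kb] by simp
    have ev: "z -` K \<inter> space M \<in> events" using z Kb by (simp add: measurable_sets)
    define K' where "K' = insert undefined K"
    have "{\<omega>\<in>space M. z \<omega> \<notin> K'} \<subseteq> space M - (z -` K \<inter> space M)" unfolding K'_def by auto
    then have "prob {\<omega>\<in>space M. z \<omega> \<notin> K'} \<le> prob (space M - (z -` K \<inter> space M))"
      using ev by (intro finite_measure_mono) auto
    also have "\<dots> = 1 - prob (z -` K \<inter> space M)" using ev by (rule prob_compl)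
    finally have "prob {\<omega>\<in>space M. z \<omega> \<notin> K'} \<le> e" using lt by linarith
    moreover have "compact K'" unfolding K'_def using K(1) by simp
    ultimately show ?thesis unfolding K'_def by blast
  qed
qed


lemma orbit_eq:
  assumes th0: "\<And>\<omega>. \<omega> \<in> space M \<Longrightarrow> \<theta> 0 \<omega> = \<omega>"
    and thadd: "\<And>s t \<omega>. \<omega> \<in> space M \<Longrightarrow> \<theta> (s + t) \<omega> = \<theta> s (\<theta> t \<omega>)"
    and thsp: "\<And>n \<omega>. \<omega> \<in> space M \<Longrightarrow> \<theta> n \<omega> \<in> space M"
    and phi0: "\<And>\<omega> x. \<omega> \<in> space M \<Longrightarrow> \<phi> 0 \<omega> x = x"
    and phiadd: "\<And>s t \<omega> x. \<omega> \<in> space M \<Longrightarrow> \<phi> (s + t) \<omega> x = \<phi> t (\<theta> (int s) \<omega>) (\<phi> s \<omega> x)"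
    and w: "\<omega> \<in> space M"
    and bo: "backward_orbit \<theta> \<phi> A \<mu> \<beta> \<omega> f"
  shows "\<phi> n (\<theta> (- int n) \<omega>) (f n) = f 0"
proof (induction n)
  case 0
  show ?case using phi0 thsp[OF w] by simp
next
  case (Suc n)
  define w' where "w' = \<theta> (- int (Suc n)) \<omega>"
  have w': "w' \<in> space M" unfolding w'_def by (rule thsp[OF w])
  have "\<theta> (int 1) w' = \<theta> (int 1 + - int (Suc n)) \<omega>" unfolding w'_def by (rule thadd[OF w, symmetric])
  also have "int 1 + - int (Suc n) = - int n" by simp
  finally have th1: "\<theta> (int 1) w' = \<theta> (- int n) \<omega>" .
  have step: "\<phi> 1 w' (f (Suc n)) = f n"
    using bo unfolding backward_orbit_def w'_def by (metis diff_Suc_1 le_add1 plus_1_eq_Suc)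
  have "\<phi> (Suc n) w' (f (Suc n)) = \<phi> (1 + n) w' (f (Suc n))" by simp
  also have "\<dots> = \<phi> n (\<theta> (int 1) w') (\<phi> 1 w' (f (Suc n)))" by (rule phiadd[OF w'])
  also have "\<dots> = f 0" using th1 step Suc.IH by simp
  finally show ?case unfolding w'_def .
qed

theorem proposition2:
  fixes M :: "'w measure" and \<theta> :: "int \<Rightarrow> 'w \<Rightarrow> 'w"
    and F :: "int \<Rightarrow> int \<Rightarrow> 'w measure"
    and \<phi> :: "nat \<Rightarrow> 'w \<Rightarrow> 'h::{real_inner, banach, second_countable_topology} \<Rightarrow> 'h"
    and A :: "'w \<Rightarrow> 'h set" and \<mu> :: real and \<alpha> \<beta> :: "'w \<Rightarrow> real"
  assumes "rds M \<theta> F \<phi>"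
    and "random_point M A"
    and "invariant_set M \<theta> \<phi> A"
    and "\<mu> > 0"
    and "\<alpha> \<in> borel_measurable M" and "\<beta> \<in> borel_measurable M"
    and "\<forall>\<omega>\<in>space M. 0 < \<alpha> \<omega> \<and> \<alpha> \<omega> < \<beta> \<omega> \<and> \<beta> \<omega> < 1"
    and "AE \<omega> in M. \<exists>x y. x \<in> U_set \<theta> \<phi> A \<mu> \<alpha> \<beta> \<omega> \<and> y \<in> U_set \<theta> \<phi> A \<mu> \<alpha> \<beta> \<omega> \<and> x \<noteq> y"
    and "\<exists>xs :: 'w \<Rightarrow> nat \<Rightarrow> 'h.
           (AE \<omega> in M. xs \<omega> 0 \<in> U_set \<theta> \<phi> A \<mu> \<alpha> \<beta> \<omega> - A \<omega> \<and>
                        backward_orbit \<theta> \<phi> A \<mu> \<beta> \<omega> (xs \<omega>)) \<and>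
           (\<forall>n. random_point M (\<lambda>\<omega>. {xs \<omega> n}))"
  shows "\<not> synchronizes M \<theta> \<phi>"
proof
  assume "synchronizes M \<theta> \<phi>"
  then obtain A' where WA: "weak_attractor M \<theta> \<phi> A'" and sing': "AE \<omega> in M. \<exists>a. A' \<omega> = {a}"
    unfolding synchronizes_def by blast
  have rcs: "random_compact_set M A'" using WA unfolding weak_attractor_def by blast
  have att: "\<And>B \<epsilon>. compact B \<Longrightarrow> B \<noteq> {} \<Longrightarrow> \<epsilon> > 0 \<Longrightarrow> (\<lambda>t. measure M {\<omega> \<in> space M.
            (SUP x\<in>B. infdist (\<phi> t (\<theta> (- int t) \<omega>) x) (A' \<omega>)) > \<epsilon>}) \<longlonglongrightarrow> 0"
    using WA unfolding weak_attractor_def by blast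
  have A'ne: "\<And>\<omega>. \<omega> \<in> space M \<Longrightarrow> A' \<omega> \<noteq> {}" and A'cpt: "AE \<omega> in M. compact (A' \<omega>)"
    and A'm: "\<And>x. (\<lambda>\<omega>. infdist x (A' \<omega>)) \<in> borel_measurable M"
    using rcs unfolding random_compact_set_def by auto
  obtain xs :: "'w \<Rightarrow> nat \<Rightarrow> 'h" where xsAE: "AE \<omega> in M. xs \<omega> 0 \<in> U_set \<theta> \<phi> A \<mu> \<alpha> \<beta> \<omega> - A \<omega> \<and>
                        backward_orbit \<theta> \<phi> A \<mu> \<beta> \<omega> (xs \<omega>)"
    and xsrp: "\<And>n. random_point M (\<lambda>\<omega>. {xs \<omega> n})"
    using assms(9) by blast
  have mds: "metric_dynamical_system M \<theta>" using assms(1) unfolding rds_def by blast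
  interpret prob_space M using mds unfolding metric_dynamical_system_def by blast
  have thmeas: "\<And>n. \<theta> n \<in> measurable M M" and thd: "\<And>n. distr M M (\<theta> n) = M"
    and th0: "\<And>\<omega>. \<omega> \<in> space M \<Longrightarrow> \<theta> 0 \<omega> = \<omega>"
    and thadd: "\<And>s t \<omega>. \<omega> \<in> space M \<Longrightarrow> \<theta> (s + t) \<omega> = \<theta> s (\<theta> t \<omega>)"
    using mds unfolding metric_dynamical_system_def by auto
  have thsp: "\<And>n \<omega>. \<omega> \<in> space M \<Longrightarrow> \<theta> n \<omega> \<in> space M"
    using thmeas by (meson measurable_space)
  have thinv: "\<theta> (int t) (\<theta> (- int t) \<omega>) = \<omega>" if "\<omega> \<in> space M" for t \<omega>
  proof -
    have "\<theta> (int t) (\<theta> (- int t) \<omega>) = \<theta> (int t + - int t) \<omega>" by (rule thadd[OF that, symmetric])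
    then show ?thesis using th0[OF that] by simp
  qed
  have AEshift: "AE \<omega> in M. P (\<theta> n \<omega>)" if "AE \<omega> in M. P \<omega>" for P n
  proof -
    have "AE \<omega> in distr M M (\<theta> n). P \<omega>" unfolding thd by (rule that)
    then show ?thesis by (rule AE_distrD[OF thmeas])
  qed
  have mpres: "measure M (\<theta> n -` S \<inter> space M) = measure M S" if "S \<in> sets M" for n S
    using measure_distr[OF thmeas that, of n] by (simp add: thd)
  have phimeas: "\<And>t. (\<lambda>(\<omega>, x). \<phi> t \<omega> x) \<in> borel_measurable (M \<Otimes>\<^sub>M borel)"
    and phi0: "\<And>\<omega> x. \<omega> \<in> space M \<Longrightarrow> \<phi> 0 \<omega> x = x"
    and phiadd: "\<And>s t \<omega> x. \<omega> \<in> space M \<Longrightarrow> \<phi> (s + t) \<omega> x = \<phi> t (\<theta> (int s) \<omega>) (\<phi> s \<omega> x)"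
    and phicont: "\<And>t \<omega>. \<omega> \<in> space M \<Longrightarrow> continuous_on UNIV (\<phi> t \<omega>)"
    using assms(1) unfolding rds_def by auto
  have phicomp: "(\<lambda>\<omega>. \<phi> t (w \<omega>) (y \<omega>)) \<in> borel_measurable M"
    if w: "w \<in> measurable M M" and y: "y \<in> borel_measurable M" for t w y
  proof -
    have "(\<lambda>\<omega>. (w \<omega>, y \<omega>)) \<in> measurable M (M \<Otimes>\<^sub>M borel)" by (rule measurable_Pair[OF w y])
    from measurable_compose[OF this phimeas[of t]] show ?thesis by simp
  qed
  have Ane: "\<And>\<omega>. \<omega> \<in> space M \<Longrightarrow> A \<omega> \<noteq> {}" and Asing: "AE \<omega> in M. \<exists>a. A \<omega> = {a}"
    and Am: "\<And>x. (\<lambda>\<omega>. infdist x (A \<omega>)) \<in> borel_measurable M"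
    using assms(2) unfolding random_point_def by auto
  obtain N0 where N0: "{\<omega>\<in>space M. \<not> (\<exists>a. A \<omega> = {a})} \<subseteq> N0" "emeasure M N0 = 0" "N0 \<in> sets M"
    using Asing by (rule AE_E)
  define ah where "ah \<omega> = (if \<omega> \<in> N0 then undefined else the_elem (A \<omega>))" for \<omega>
  have ahA: "A \<omega> = {ah \<omega>}" if wsp: "\<omega> \<in> space M" "\<omega> \<notin> N0" for \<omega>
  proof -
    have "\<exists>a. A \<omega> = {a}" using N0(1) wsp by blast
    then obtain a where "A \<omega> = {a}" by blast
    then show ?thesis unfolding ah_def using wsp by simp
  qed
  have N0null: "N0 \<in> null_sets M" using N0 by (simp add: null_setsI)
  have ahAE: "AE \<omega> in M. A \<omega> = {ah \<omega>}"
    by (rule AE_I'[OF N0null]) (auto dest: ahA)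
  have ahm: "ah \<in> borel_measurable M"
  proof (rule measurable_from_dist)
    fix y
    have mI: "(\<lambda>\<omega>. if \<omega> \<in> N0 then dist y undefined else infdist y (A \<omega>)) \<in> borel_measurable M"
      using N0(3) Am by (intro measurable_If_set) auto
    have eqf: "dist y (ah \<omega>) = (if \<omega> \<in> N0 then dist y undefined else infdist y (A \<omega>))"
      if ws: "\<omega> \<in> space M" for \<omega>
    proof (cases "\<omega> \<in> N0")
      case True then show ?thesis by (simp add: ah_def)
    next
      case False
      then have "A \<omega> = {ah \<omega>}" using ahA ws by blast
      then show ?thesis using False by simp
    qed
    show "(\<lambda>\<omega>. dist y (ah \<omega>)) \<in> borel_measurable M"
      by (subst measurable_cong[OF eqf]) (auto intro: mI)
  qed
  have xsm: "(\<lambda>\<omega>. xs \<omega> n) \<in> borel_measurable M" for n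
  proof (rule measurable_from_dist)
    fix y
    have "(\<lambda>\<omega>. infdist y {xs \<omega> n}) \<in> borel_measurable M" using xsrp[of n] unfolding random_point_def by blast
    then show "(\<lambda>\<omega>. dist y (xs \<omega> n)) \<in> borel_measurable M" by simp
  qed
  have G: "AE \<omega> in M. z0 \<omega> \<in> A' \<omega>"
    if zm: "\<And>t. z t \<in> borel_measurable M" and z0m: "z0 \<in> borel_measurable M"
      and zeq: "\<And>t. AE \<omega> in M. \<phi> t (\<theta> (- int t) \<omega>) (z t \<omega>) = z0 \<omega>"
      and ztight: "\<And>e. e > 0 \<Longrightarrow> \<exists>B. compact B \<and> B \<noteq> {} \<and> (\<forall>t. measure M {\<omega>\<in>space M. z t \<omega> \<notin> B} \<le> e)"
    for z :: "nat \<Rightarrow> 'w \<Rightarrow> 'h" and z0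
  proof -
    have Em: "(\<lambda>\<omega>. infdist (z0 \<omega>) (A' \<omega>)) \<in> borel_measurable M"
      by (rule measurable_infdist_comp[OF z0m A'm])
    have E0: "measure M {\<omega>\<in>space M. infdist (z0 \<omega>) (A' \<omega>) > \<delta>} = 0" if \<delta>: "\<delta> > 0" for \<delta>
    proof -
      define E where "E = {\<omega>\<in>space M. infdist (z0 \<omega>) (A' \<omega>) > \<delta>}"
      have Es: "E \<in> sets M" using Em unfolding E_def borel_measurable_iff_greater by blast
      have "measure M E \<le> 0 + e" if e: "e > 0" for e
      proof -
        obtain B where B: "compact B" "B \<noteq> {}" "\<And>t. measure M {\<omega>\<in>space M. z t \<omega> \<notin> B} \<le> e"
          using ztight[OF e] by blast
        define S where "S t = {\<omega>\<in>space M. (SUP x\<in>B. infdist (\<phi> t (\<theta> (- int t) \<omega>) x) (A' \<omega>)) > \<delta>}" for t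
        have lim: "(\<lambda>t. measure M (S t)) \<longlonglongrightarrow> 0" unfolding S_def by (rule att[OF B(1) B(2) \<delta>])
        have gm: "(\<lambda>\<omega>. infdist (\<phi> t (\<theta> (- int t) \<omega>) x) (A' \<omega>)) \<in> borel_measurable M" for t x
          by (rule measurable_infdist_comp[OF phicomp[OF thmeas measurable_const] A'm]) simp
        have gc: "continuous_on B (\<lambda>x. infdist (\<phi> t (\<theta> (- int t) \<omega>) x) (A' \<omega>))" if "\<omega> \<in> space M" for t \<omega>
          by (intro continuous_on_infdist continuous_on_subset[OF phicont[OF thsp[OF that]]]) auto
        have Ss: "S t \<in> sets M" for t
          using measurable_SUP_compact[OF B(1) B(2) gm gc] unfolding S_def borel_measurable_iff_greater by blast
        have Zs: "{\<omega>\<in>space M. z t \<omega> \<notin> B} \<in> sets M" for t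
        proof -
          have "{\<omega>\<in>space M. z t \<omega> \<notin> B} = space M - (z t -` B \<inter> space M)" by auto
          moreover have "z t -` B \<inter> space M \<in> sets M"
            using zm[of t] B(1) by (intro measurable_sets[of _ M borel]) (auto simp: borel_compact)
          ultimately show ?thesis by auto
        qed
        have bnd: "measure M E \<le> e + measure M (S t)" for t
        proof -
          obtain Nt where Nt: "{\<omega>\<in>space M. \<not> \<phi> t (\<theta> (- int t) \<omega>) (z t \<omega>) = z0 \<omega>} \<subseteq> Nt"
            "emeasure M Nt = 0" "Nt \<in> sets M"
            using zeq[of t] by (rule AE_E)
          have sub: "E \<subseteq> ({\<omega>\<in>space M. z t \<omega> \<notin> B} \<union> S t) \<union> Nt"
          proof
            fix \<omega> assume w: "\<omega> \<in> E"
            show "\<omega> \<in> ({\<omega>\<in>space M. z t \<omega> \<notin> B} \<union> S t) \<union> Nt"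
            proof (rule ccontr)
              assume nin: "\<omega> \<notin> ({\<omega>\<in>space M. z t \<omega> \<notin> B} \<union> S t) \<union> Nt"
              have ws: "\<omega> \<in> space M" using w unfolding E_def by auto
              have zB: "z t \<omega> \<in> B" using nin ws by auto
              have eq: "\<phi> t (\<theta> (- int t) \<omega>) (z t \<omega>) = z0 \<omega>" using nin Nt(1) ws by auto
              have "compact ((\<lambda>x. infdist (\<phi> t (\<theta> (- int t) \<omega>) x) (A' \<omega>)) ` B)"
                by (rule compact_continuous_image[OF gc[OF ws] B(1)])
              then have bdd: "bdd_above ((\<lambda>x. infdist (\<phi> t (\<theta> (- int t) \<omega>) x) (A' \<omega>)) ` B)"
                by (intro bounded_imp_bdd_above compact_imp_bounded)
              have "infdist (z0 \<omega>) (A' \<omega>) \<le> (SUP x\<in>B. infdist (\<phi> t (\<theta> (- int t) \<omega>) x) (A' \<omega>))"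
                using cSUP_upper[OF zB bdd] eq by simp
              moreover have "infdist (z0 \<omega>) (A' \<omega>) > \<delta>" using w unfolding E_def by auto
              ultimately have "\<omega> \<in> S t" unfolding S_def using ws by auto
              then show False using nin by auto
            qed
          qed
          have "measure M E \<le> measure M (({\<omega>\<in>space M. z t \<omega> \<notin> B} \<union> S t) \<union> Nt)"
            using sub Zs Ss Nt(3) by (intro finite_measure_mono) auto
          also have "\<dots> \<le> measure M ({\<omega>\<in>space M. z t \<omega> \<notin> B} \<union> S t) + measure M Nt"
            using Zs Ss Nt(3) by (intro measure_Un_le) auto
          also have "measure M Nt = 0" using Nt(2) by (simp add: emeasure_eq_measure)
          also have "measure M ({\<omega>\<in>space M. z t \<omega> \<notin> B} \<union> S t) \<le> measure M {\<omega>\<in>space M. z t \<omega> \<notin> B} + measure M (S t)"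
            using Zs Ss by (intro measure_Un_le) auto
          finally show ?thesis using B(3)[of t] by linarith
        qed
        have lim2: "(\<lambda>t. e + measure M (S t)) \<longlonglongrightarrow> e + 0" by (intro tendsto_add tendsto_const lim)
        have "measure M E \<le> e + 0"
          by (rule tendsto_le[OF trivial_limit_sequentially lim2 tendsto_const]) (simp add: bnd)
        then show ?thesis by simp
      qed
      then have "measure M E \<le> 0" by (rule field_le_epsilon)
      then show ?thesis unfolding E_def using measure_nonneg[of M] by (meson antisym)
    qed
    have AEn: "AE \<omega> in M. infdist (z0 \<omega>) (A' \<omega>) \<le> 1 / Suc n" for n
    proof (rule AE_I')
      define E where "E = {\<omega>\<in>space M. infdist (z0 \<omega>) (A' \<omega>) > 1 / Suc n}"
      have Es: "E \<in> sets M" using Em unfolding E_def borel_measurable_iff_greater by blast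
      have "measure M E = 0" unfolding E_def by (rule E0) simp
      then show "E \<in> null_sets M" using Es by (simp add: null_setsI emeasure_eq_measure)
      show "{\<omega>\<in>space M. \<not> infdist (z0 \<omega>) (A' \<omega>) \<le> 1 / Suc n} \<subseteq> E" unfolding E_def by auto
    qed
    then have "AE \<omega> in M. \<forall>n. infdist (z0 \<omega>) (A' \<omega>) \<le> 1 / Suc n" by (simp add: AE_all_countable)
    then show ?thesis using A'cpt AE_space
    proof eventually_elim
      case (elim \<omega>)
      have "infdist (z0 \<omega>) (A' \<omega>) \<le> 0"
      proof (rule ccontr)
        assume "\<not> infdist (z0 \<omega>) (A' \<omega>) \<le> 0"
        then obtain n where "1 / Suc n < infdist (z0 \<omega>) (A' \<omega>)"
          using reals_Archimedean[of "infdist (z0 \<omega>) (A' \<omega>)"] by (auto simp: inverse_eq_divide)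
        then show False using elim(1) by (meson not_le)
      qed
      then have "infdist (z0 \<omega>) (A' \<omega>) = 0" using infdist_nonneg[of "z0 \<omega>" "A' \<omega>"] by linarith
      moreover have "A' \<omega> \<noteq> {}" using A'ne elim(3) by blast
      ultimately show ?case using in_closed_iff_infdist_zero[OF compact_imp_closed[OF elim(2)]] by simp
    qed
  qed
  have xseq: "AE \<omega> in M. \<phi> t (\<theta> (- int t) \<omega>) (xs \<omega> t) = xs \<omega> 0" for t
    using xsAE AE_space
  proof eventually_elim
    case (elim \<omega>)
    have bo: "backward_orbit \<theta> \<phi> A \<mu> \<beta> \<omega> (xs \<omega>)" using elim(1) by blast
    show ?case
      by (rule orbit_eq[where M=M and A=A and \<mu>=\<mu> and \<beta>=\<beta>, OF th0 thadd thsp phi0 phiadd elim(2) bo])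
  qed
  have ahshiftA: "AE \<omega> in M. A (\<theta> n \<omega>) = {ah (\<theta> n \<omega>)}" for n by (rule AEshift[OF ahAE])
  have evK: "{\<omega>\<in>space M. f \<omega> \<notin> K} \<in> sets M" if "f \<in> borel_measurable M" "compact K" for f :: "'w \<Rightarrow> 'h" and K
  proof -
    have "{\<omega>\<in>space M. f \<omega> \<notin> K} = space M - (f -` K \<inter> space M)" by auto
    moreover have "f -` K \<inter> space M \<in> sets M"
      using that by (intro measurable_sets[of _ M borel]) (auto simp: borel_compact)
    ultimately show ?thesis by auto
  qed
  have X: "AE \<omega> in M. xs \<omega> 0 \<in> A' \<omega>"
  proof (rule G[of "\<lambda>t \<omega>. xs \<omega> t" "\<lambda>\<omega>. xs \<omega> 0"])
    show "\<And>t. (\<lambda>\<omega>. xs \<omega> t) \<in> borel_measurable M" by (rule xsm)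
    show "(\<lambda>\<omega>. xs \<omega> 0) \<in> borel_measurable M" by (rule xsm)
    show "\<And>t. AE \<omega> in M. \<phi> t (\<theta> (- int t) \<omega>) (xs \<omega> t) = xs \<omega> 0" by (rule xseq)
    fix e :: real assume e: "e > 0"
    obtain K where K: "compact K" "K \<noteq> {}" "measure M {\<omega>\<in>space M. ah \<omega> \<notin> K} \<le> e/2"
      using tight_rv[OF prob_space_axioms ahm, of "e/2"] e by auto
    have "\<forall>t. \<exists>L. compact L \<and> L \<noteq> {} \<and> measure M {\<omega>\<in>space M. xs \<omega> t \<notin> L} \<le> e/2"
    proof
      fix t
      show "\<exists>L. compact L \<and> L \<noteq> {} \<and> measure M {\<omega>\<in>space M. xs \<omega> t \<notin> L} \<le> e/2"
        by (rule tight_rv[OF prob_space_axioms xsm]) (use e in simp)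
    qed
    then obtain L where L: "\<And>t. compact (L t)" "\<And>t. measure M {\<omega>\<in>space M. xs \<omega> t \<notin> L t} \<le> e/2"
      by metis
    define r where "r t = exp (- \<mu> * real t)" for t :: nat
    have rlim: "\<exists>T. \<forall>t\<ge>T. r t < e'" if e': "e' > 0" for e'
    proof -
      obtain T :: nat where T: "- ln e' / \<mu> < real T" using reals_Archimedean2 by blast
      have "r t < e'" if tT: "t \<ge> T" for t
      proof -
        have "- ln e' / \<mu> < real t" using T tT by (meson less_le_trans of_nat_le_iff)
        then have "(- ln e' / \<mu>) * \<mu> < real t * \<mu>" by (rule mult_strict_right_mono[OF _ assms(4)])
        then have "- ln e' < real t * \<mu>" using assms(4) by simp
        then have "- \<mu> * real t < ln e'" by (simp add: algebra_simps)
        then have "exp (- \<mu> * real t) < exp (ln e')" by simp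
        then show ?thesis unfolding r_def using e' by simp
      qed
      then show ?thesis by blast
    qed
    define B where "B = K \<union> (\<Union>t. L t \<inter> {y. infdist y K \<le> r t})"
    have Bc: "compact B" unfolding B_def by (rule compact_tail_union[OF K(1) K(2) L(1) rlim])
    have Kev: "{\<omega>\<in>space M. ah \<omega> \<notin> K} \<in> sets M" by (rule evK[OF ahm K(1)])
    have bndt: "measure M {\<omega>\<in>space M. xs \<omega> t \<notin> B} \<le> e" for t
    proof -
      obtain Nt where Nt: "{\<omega>\<in>space M. \<not> ((xs \<omega> 0 \<in> U_set \<theta> \<phi> A \<mu> \<alpha> \<beta> \<omega> - A \<omega> \<and> backward_orbit \<theta> \<phi> A \<mu> \<beta> \<omega> (xs \<omega>))
              \<and> A (\<theta> (- int t) \<omega>) = {ah (\<theta> (- int t) \<omega>)})} \<subseteq> Nt" "emeasure M Nt = 0" "Nt \<in> sets M"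
        using AE_conjI[OF xsAE ahshiftA[of "- int t"]] by (rule AE_E)
      define Z1 where "Z1 = {\<omega>\<in>space M. xs \<omega> t \<notin> L t}"
      define Z2 where "Z2 = \<theta> (- int t) -` {\<omega>\<in>space M. ah \<omega> \<notin> K} \<inter> space M"
      have Z1s: "Z1 \<in> sets M" unfolding Z1_def by (rule evK[OF xsm L(1)])
      have Z2s: "Z2 \<in> sets M" unfolding Z2_def by (rule measurable_sets[OF thmeas Kev])
      have Z2m: "measure M Z2 \<le> e/2" unfolding Z2_def using mpres[OF Kev] K(3) by simp
      have Bs: "{\<omega>\<in>space M. xs \<omega> t \<notin> B} \<in> sets M" by (rule evK[OF xsm Bc])
      have sub: "{\<omega>\<in>space M. xs \<omega> t \<notin> B} \<subseteq> (Z1 \<union> Z2) \<union> Nt"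
      proof
        fix \<omega> assume w: "\<omega> \<in> {\<omega>\<in>space M. xs \<omega> t \<notin> B}"
        show "\<omega> \<in> (Z1 \<union> Z2) \<union> Nt"
        proof (rule ccontr)
          assume nin: "\<omega> \<notin> (Z1 \<union> Z2) \<union> Nt"
          have ws: "\<omega> \<in> space M" using w by simp
          have good: "backward_orbit \<theta> \<phi> A \<mu> \<beta> \<omega> (xs \<omega>)" "A (\<theta> (- int t) \<omega>) = {ah (\<theta> (- int t) \<omega>)}"
            using nin Nt(1) ws by auto
          have inL: "xs \<omega> t \<in> L t" using nin ws unfolding Z1_def by auto
          have inK: "ah (\<theta> (- int t) \<omega>) \<in> K" using nin ws thsp[OF ws] unfolding Z2_def by auto
          have "infdist (xs \<omega> t) (A (\<theta> (- int t) \<omega>)) \<le> \<beta> \<omega> * exp (- \<mu> * real t)"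
            using good(1) unfolding backward_orbit_def by blast
          then have d: "dist (xs \<omega> t) (ah (\<theta> (- int t) \<omega>)) \<le> \<beta> \<omega> * r t" using good(2) unfolding r_def by simp
          have "\<beta> \<omega> * r t \<le> 1 * r t" using assms(7) ws unfolding r_def by (intro mult_right_mono) auto
          then have "infdist (xs \<omega> t) K \<le> r t" using infdist_le[OF inK, of "xs \<omega> t"] d by linarith
          then have "xs \<omega> t \<in> B" unfolding B_def using inL by blast
          then show False using w by simp
        qed
      qed
      have "measure M {\<omega>\<in>space M. xs \<omega> t \<notin> B} \<le> measure M ((Z1 \<union> Z2) \<union> Nt)"
        using sub Z1s Z2s Nt(3) by (intro finite_measure_mono) auto
      also have "\<dots> \<le> measure M (Z1 \<union> Z2) + measure M Nt"
        using Z1s Z2s Nt(3) by (intro measure_Un_le) auto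
      also have "measure M Nt = 0" using Nt(2) by (simp add: emeasure_eq_measure)
      also have "measure M (Z1 \<union> Z2) \<le> measure M Z1 + measure M Z2"
        using Z1s Z2s by (intro measure_Un_le) auto
      finally show ?thesis using L(2)[of t] Z2m unfolding Z1_def by linarith
    qed
    have "B \<noteq> {}" unfolding B_def using K(2) by blast
    then show "\<exists>B. compact B \<and> B \<noteq> {} \<and> (\<forall>t. measure M {\<omega>\<in>space M. xs \<omega> t \<notin> B} \<le> e)"
      using Bc bndt by blast
  qed
  have Y: "AE \<omega> in M. ah \<omega> \<in> A' \<omega>"
  proof (rule G[of "\<lambda>t \<omega>. ah (\<theta> (- int t) \<omega>)" ah])
    show "\<And>t. (\<lambda>\<omega>. ah (\<theta> (- int t) \<omega>)) \<in> borel_measurable M" by (rule measurable_compose[OF thmeas ahm])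
    show "ah \<in> borel_measurable M" by (rule ahm)
    show "AE \<omega> in M. \<phi> t (\<theta> (- int t) \<omega>) (ah (\<theta> (- int t) \<omega>)) = ah \<omega>" for t
    proof -
      have inv: "AE \<omega> in M. \<phi> t \<omega> ` A \<omega> = A (\<theta> (int t) \<omega>)" using assms(3) unfolding invariant_set_def by blast
      have "AE \<omega> in M. \<phi> t (\<theta> (- int t) \<omega>) ` A (\<theta> (- int t) \<omega>) = A (\<theta> (int t) (\<theta> (- int t) \<omega>))"
        by (rule AEshift[OF inv])
      then show ?thesis using ahAE ahshiftA[of "- int t"] AE_space
      proof eventually_elim
        case (elim \<omega>)
        have "\<phi> t (\<theta> (- int t) \<omega>) ` {ah (\<theta> (- int t) \<omega>)} = {ah \<omega>}"
          using elim(1) elim(2) elim(3) thinv[OF elim(4)] by simp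
        then show ?case by simp
      qed
    qed
    fix e :: real assume e: "e > 0"
    obtain K where K: "compact K" "K \<noteq> {}" "measure M {\<omega>\<in>space M. ah \<omega> \<notin> K} \<le> e"
      using tight_rv[OF prob_space_axioms ahm e] by auto
    have Kev: "{\<omega>\<in>space M. ah \<omega> \<notin> K} \<in> sets M" by (rule evK[OF ahm K(1)])
    have "measure M {\<omega>\<in>space M. ah (\<theta> (- int t) \<omega>) \<notin> K} \<le> e" for t
    proof -
      have "{\<omega>\<in>space M. ah (\<theta> (- int t) \<omega>) \<notin> K} = \<theta> (- int t) -` {\<omega>\<in>space M. ah \<omega> \<notin> K} \<inter> space M"
        using thsp by auto
      then show ?thesis using mpres[OF Kev] K(3) by simp
    qed
    then show "\<exists>B. compact B \<and> B \<noteq> {} \<and> (\<forall>t. measure M {\<omega>\<in>space M. ah (\<theta> (- int t) \<omega>) \<notin> B} \<le> e)"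
      using K(1,2) by blast
  qed
  have "AE \<omega> in M. False" using X Y sing' ahAE xsAE
  proof eventually_elim
    case (elim \<omega>)
    obtain a where a: "A' \<omega> = {a}" using elim(3) by blast
    have "xs \<omega> 0 = ah \<omega>" using elim(1,2) a by simp
    then show False using elim(4,5) by simp
  qed
  then show False by (simp add: AE_False)
qed

end
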